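(* Let $P=\langle V,E,v_0\rangle$ be a CFA, let $\pi_1,\ldots,\pi_k$ be looping traces of $P$ with heads $v_1,\ldots,v_k$, let $\hat{\pi}_1,\ldots,\hat{\pi}_k$ be (possibly under-approximating) accelerators for them, and let $\hat{P}$ be the accelerated CFA obtained from $P$ by adding, for each $j$, a non-branching path from $v_j$ to $v_j$ labelled by $\hat{\pi}_j$. Then: (1) every trace of $P$ is subsumed by at least one trace of $\hat{P}$; (2) if $\rho_1$ is an accelerated trace accepted by $\hat{P}$ and $\langle\sigma_0,\sigma\rangle\in[\![\rho_1]\!]$, then there exists a trace $\rho_2$ accepted by $P$ with $\langle\sigma_0,\sigma\rangle\in[\![\rho_2]\!]$.
   Context: Programs are over a finite set of program variables; a state assigns a value to each variable. Statements are assignments $x:=e$, nondeterministic assignments $x:=*$, assumptions $[B]$ (identity restricted to states satisfying predicate $B$), and $\mathsf{skip}$; each statement $s$ denotes a relation $[\![s]\!]$ on states, and a trace (finite statement sequence) denotes the relational composition of its statements in order (empty trace: identity); $[\![\pi]\!]^0$ is the identity and $[\![\pi]\!]^n=[\![\pi]\!]\circ[\![\pi]\!]^{n-1}$. A CFA $P=\langle V,E,v_0\rangle$ has finite vertex set $V$, edges $E\subseteq V\times\mathsf{Stmts}_P\times V$ labelled with statements, and initial vertex $v_0$. A trace of a CFA is the label sequence of a path in it; it is looping with head $v$ if the path starts and ends at $v$, and accepted if the path starts at $v_0$. An accelerator for a looping trace $\pi$ is a statement sequence $\hat{\pi}$ with $[\![\hat{\pi}]\!]=\bigcup_{i\ge0}[\![\pi]\!]^i$;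 an under-approximating accelerator is a statement sequence $\hat{\pi}$ with a function $\beta$ from states to $\mathbb{N}_0$ such that $\langle\sigma,\sigma'\rangle\in[\![\hat{\pi}]\!]$ iff $\exists i\le\beta(\sigma)$ with $\langle\sigma,\sigma'\rangle\in[\![\pi]\!]^i$, where $\beta$ satisfies: $i\le\beta(\sigma)$ and $\langle\sigma,\sigma'\rangle\in[\![\pi]\!]^i$ imply $\beta(\sigma')\le\beta(\sigma)-i$. A trace of $\hat{P}$ is accelerated if it traverses one of the added accelerator paths. A trace $\rho$ is subsumed by a trace $\rho'$ if $[\![\rho]\!]\subseteq[\![\rho']\!]$. *)

theory Defs
  imports Main
begin

type_synonym ('x, 'd) state = "'x \<Rightarrow> 'd"

datatype ('x, 'd) stmt =
    Assign 'x "('x, 'd) state \<Rightarrow> 'd"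
  | Havoc 'x
  | Assume "('x, 'd) state \<Rightarrow> bool"
  | Skip

fun sem :: "('x, 'd) stmt \<Rightarrow> (('x, 'd) state) rel" where
  "sem (Assign x e) = {(\<sigma>, \<sigma>(x := e \<sigma>)) | \<sigma>. True}"
| "sem (Havoc x) = {(\<sigma>, \<sigma>(x := v)) | \<sigma> v. True}"
| "sem (Assume B) = {(\<sigma>, \<sigma>) | \<sigma>. B \<sigma>}"
| "sem Skip = Id"

fun tsem :: "('x, 'd) stmt list \<Rightarrow> (('x, 'd) state) rel" where
  "tsem [] = Id"
| "tsem (s # ss) = sem s O tsem ss"

type_synonym ('v, 'x, 'd) cfa = "'v set \<times> ('v \<times> ('x, 'd) stmt \<times> 'v) set \<times> 'v"

definition is_cfa :: "('v, 'x, 'd) cfa \<Rightarrow> bool" where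
  "is_cfa P = (case P of (V, E, v0) \<Rightarrow> finite V \<and> E \<subseteq> V \<times> UNIV \<times> V \<and> v0 \<in> V)"

fun path :: "('v \<times> ('x, 'd) stmt \<times> 'v) set \<Rightarrow> 'v \<Rightarrow> ('x, 'd) stmt list \<Rightarrow> 'v \<Rightarrow> bool" where
  "path E u [] w = (u = w)"
| "path E u (s # ss) w = (\<exists>u'. (u, s, u') \<in> E \<and> path E u' ss w)"

definition is_trace :: "('v, 'x, 'd) cfa \<Rightarrow> ('x, 'd) stmt list \<Rightarrow> bool" where
  "is_trace P ss = (case P of (V, E, v0) \<Rightarrow> \<exists>u w. u \<in> V \<and> path E u ss w)"

definition looping_trace :: "('v, 'x, 'd) cfa \<Rightarrow> 'v \<Rightarrow> ('x, 'd) stmt list \<Rightarrow> bool" where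
  "looping_trace P v ss = (case P of (V, E, v0) \<Rightarrow> v \<in> V \<and> path E v ss v)"

definition accepted :: "('v, 'x, 'd) cfa \<Rightarrow> ('x, 'd) stmt list \<Rightarrow> bool" where
  "accepted P ss = (case P of (V, E, v0) \<Rightarrow> \<exists>w. path E v0 ss w)"

definition subsumed :: "('x, 'd) stmt list \<Rightarrow> ('x, 'd) stmt list \<Rightarrow> bool" where
  "subsumed \<rho> \<rho>' = (tsem \<rho> \<subseteq> tsem \<rho>')"

definition accelerator :: "('x, 'd) stmt list \<Rightarrow> ('x, 'd) stmt list \<Rightarrow> bool" where
  "accelerator \<pi> \<pi>h = (tsem \<pi>h = (\<Union>i. tsem \<pi> ^^ i))"

definition under_accelerator :: "('x, 'd) stmt list \<Rightarrow> ('x, 'd) stmt list \<Rightarrow> bool" where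
  "under_accelerator \<pi> \<pi>h = (\<exists>\<beta> :: ('x, 'd) state \<Rightarrow> nat.
      (\<forall>\<sigma> \<sigma>'. (\<sigma>, \<sigma>') \<in> tsem \<pi>h \<longleftrightarrow> (\<exists>i \<le> \<beta> \<sigma>. (\<sigma>, \<sigma>') \<in> tsem \<pi> ^^ i)) \<and>
      (\<forall>\<sigma> \<sigma>' i. i \<le> \<beta> \<sigma> \<and> (\<sigma>, \<sigma>') \<in> tsem \<pi> ^^ i \<longrightarrow> \<beta> \<sigma>' \<le> \<beta> \<sigma> - i))"

text \<open>Given k loops with heads hds j, accelerators pih j (j < k), the accelerated CFA has
vertices Inl v for original vertices and fresh vertices Inr (j, i) (0 < i < length (pih j))
for the interior of the added non-branching path from hds j to hds j labelled pih j.\<close>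

definition acc_node :: "(nat \<Rightarrow> 'v) \<Rightarrow> (nat \<Rightarrow> ('x, 'd) stmt list) \<Rightarrow> nat \<Rightarrow> nat \<Rightarrow> 'v + nat \<times> nat" where
  "acc_node hds pih j i = (if i = 0 \<or> i = length (pih j) then Inl (hds j) else Inr (j, i))"

definition acc_edges :: "nat \<Rightarrow> (nat \<Rightarrow> 'v) \<Rightarrow> (nat \<Rightarrow> ('x, 'd) stmt list)
    \<Rightarrow> (('v + nat \<times> nat) \<times> ('x, 'd) stmt \<times> ('v + nat \<times> nat)) set" where
  "acc_edges k hds pih = {(acc_node hds pih j i, pih j ! i, acc_node hds pih j (Suc i)) | j i.
      j < k \<and> i < length (pih j)}"

definition accelerated_cfa :: "('v, 'x, 'd) cfa \<Rightarrow> nat \<Rightarrow> (nat \<Rightarrow> 'v) \<Rightarrow> (nat \<Rightarrow> ('x, 'd) stmt list)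
    \<Rightarrow> ('v + nat \<times> nat, 'x, 'd) cfa" where
  "accelerated_cfa P k hds pih = (case P of (V, E, v0) \<Rightarrow>
     (Inl ` V \<union> {Inr (j, i) | j i. j < k \<and> 0 < i \<and> i < length (pih j)},
      {(Inl u, s, Inl w) | u s w. (u, s, w) \<in> E} \<union> acc_edges k hds pih,
      Inl v0))"

text \<open>A trace accepted by the accelerated CFA that is accelerated: it is the label of a path
from the initial vertex, ending at an original vertex (so every accelerator path entered is
traversed completely), that uses at least one edge of an added accelerator path.\<close>

fun path_e :: "('v \<times> ('x, 'd) stmt \<times> 'v) set \<Rightarrow> 'v \<Rightarrow> ('v \<times> ('x, 'd) stmt \<times> 'v) list \<Rightarrow> 'v \<Rightarrow> bool" where
  "path_e E u [] w = (u = w)"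
| "path_e E u (e # es) w = (e \<in> E \<and> fst e = u \<and> path_e E (snd (snd e)) es w)"

definition accelerated_accepted_trace :: "('v, 'x, 'd) cfa \<Rightarrow> nat \<Rightarrow> (nat \<Rightarrow> 'v)
    \<Rightarrow> (nat \<Rightarrow> ('x, 'd) stmt list) \<Rightarrow> ('x, 'd) stmt list \<Rightarrow> bool" where
  "accelerated_accepted_trace P k hds pih \<rho> = (case accelerated_cfa P k hds pih of (V', E', v0') \<Rightarrow>
     \<exists>es w. path_e E' v0' es (Inl w) \<and> map (fst \<circ> snd) es = \<rho> \<and>
            (\<exists>e \<in> set es. e \<in> acc_edges k hds pih))"

end

theory Submission
  imports Defs
begin

lemma tsem_append: "tsem (a @ b) = tsem a O tsem b"
  by (induction a) auto

lemma path_append: "path E u (a @ b) w \<longleftrightarrow> (\<exists>m. path E u a m \<and> path E m b w)"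
  by (induction a arbitrary: u) auto

lemma tsem_rep: "tsem (concat (replicate n p)) = tsem p ^^ n"
  by (induction n) (simp_all add: tsem_append relpow_commute[symmetric])

lemma path_rep: "path E h p h \<Longrightarrow> path E h (concat (replicate n p)) h"
  by (induction n) (auto simp: path_append)

lemma acc_sub: "accelerator p ph \<or> under_accelerator p ph \<Longrightarrow> tsem ph \<subseteq> (\<Union>i. tsem p ^^ i)"
proof
  fix x assume x: "x \<in> tsem ph" and h: "accelerator p ph \<or> under_accelerator p ph"
  obtain a b where ab: "x = (a, b)" by (cases x)
  show "x \<in> (\<Union>i. tsem p ^^ i)"
  proof (cases "accelerator p ph")
    case True then show ?thesis using x by (simp add: accelerator_def)
  next
    case False
    then obtain \<beta> where "\<forall>\<sigma> \<sigma>'. (\<sigma>, \<sigma>') \<in> tsem ph \<longleftrightarrow> (\<exists>i \<le> \<beta> \<sigma>. (\<sigma>, \<sigma>') \<in> tsem p ^^ i)"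
      using h unfolding under_accelerator_def by blast
    then show ?thesis using x ab by blast
  qed
qed

lemma acc_node_Inr: "acc_node hds pih j i = Inr (j', i') \<Longrightarrow> j = j' \<and> i = i'"
  by (auto simp: acc_node_def split: if_splits)

lemma acc_node_Inl: "acc_node hds pih j i = Inl u \<Longrightarrow> (i = 0 \<or> i = length (pih j)) \<and> u = hds j"
  by (auto simp: acc_node_def split: if_splits)

lemma accel_seg:
  assumes "path_e ({(Inl u, s, Inl w) | u s w. (u, s, w) \<in> E} \<union> acc_edges k hds pih) (acc_node hds pih j i) es (Inl w)"
    "0 < i" "i \<le> length (pih j)"
  shows "\<exists>es1 es2. es = es1 @ es2 \<and> map (fst \<circ> snd) es1 = drop i (pih j) \<and>
     path_e ({(Inl u, s, Inl w) | u s w. (u, s, w) \<in> E} \<union> acc_edges k hds pih) (Inl (hds j)) es2 (Inl w)"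
  using assms
proof (induction es arbitrary: i)
  case Nil
  then show ?case by (auto simp: acc_node_def split: if_splits)
next
  case (Cons e es)
  show ?case
  proof (cases "i = length (pih j)")
    case True
    then show ?thesis using Cons.prems by (intro exI[of _ "[]"] exI[of _ "e # es"]) (simp add: acc_node_def)
  next
    case False
    hence node: "acc_node hds pih j i = Inr (j, i)" using Cons.prems by (auto simp: acc_node_def)
    have e1: "e \<in> {(Inl u, s, Inl w) | u s w. (u, s, w) \<in> E} \<union> acc_edges k hds pih"
      and e2: "fst e = Inr (j, i)" using Cons.prems(1) node by simp_all
    have "e \<notin> {(Inl u, s, Inl w) | u s w. (u, s, w) \<in> E}"
    proof
      assume "e \<in> {(Inl u, s, Inl w) | u s w. (u, s, w) \<in> E}"
      then obtain a s b where "e = (Inl a, s, Inl b)" by blast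
      with e2 show False by simp
    qed
    hence ein: "e \<in> acc_edges k hds pih" using e1 by blast
    then obtain j' i' where e: "e = (acc_node hds pih j' i', pih j' ! i', acc_node hds pih j' (Suc i'))"
      "j' < k" "i' < length (pih j')" unfolding acc_edges_def by blast
    have "j' = j \<and> i' = i" using Cons.prems(1) node e(1) acc_node_Inr[of hds pih j' i' j i] by auto
    hence e2: "e = (Inr (j, i), pih j ! i, acc_node hds pih j (Suc i))" using e(1) node by auto
    have lt: "i < length (pih j)" using False Cons.prems by auto
    have "path_e ({(Inl u, s, Inl w) | u s w. (u, s, w) \<in> E} \<union> acc_edges k hds pih) (acc_node hds pih j (Suc i)) es (Inl w)"
      using Cons.prems(1) e2 by auto
    moreover have "0 < Suc i" "Suc i \<le> length (pih j)" using lt by auto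
    ultimately have "\<exists>es1 es2. es = es1 @ es2 \<and> map (fst \<circ> snd) es1 = drop (Suc i) (pih j) \<and>
      path_e ({(Inl u, s, Inl w) | u s w. (u, s, w) \<in> E} \<union> acc_edges k hds pih) (Inl (hds j)) es2 (Inl w)"
      by (rule Cons.IH)
    then obtain es1 es2 where sp:
      "es = es1 @ es2" "map (fst \<circ> snd) es1 = drop (Suc i) (pih j)"
      "path_e ({(Inl u, s, Inl w) | u s w. (u, s, w) \<in> E} \<union> acc_edges k hds pih) (Inl (hds j)) es2 (Inl w)"
      by (elim exE conjE)
    have d: "drop i (pih j) = pih j ! i # drop (Suc i) (pih j)" using lt by (rule Cons_nth_drop_Suc[symmetric])
    have "e # es = (e # es1) @ es2" using sp(1) by simp
    moreover have "map (fst \<circ> snd) (e # es1) = drop i (pih j)" using sp(2) e2 d by simp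
    ultimately show ?thesis using sp(3) by blast
  qed
qed

lemma main_sim:
  assumes loops: "\<forall>j < k. path E (hds j) (pi j) (hds j)"
    and accs: "\<forall>j < k. accelerator (pi j) (pih j) \<or> under_accelerator (pi j) (pih j)"
  shows "path_e ({(Inl u, s, Inl w) | u s w. (u, s, w) \<in> E} \<union> acc_edges k hds pih) (Inl u) es (Inl w)
    \<Longrightarrow> (\<sigma>0, \<sigma>) \<in> tsem (map (fst \<circ> snd) es) \<Longrightarrow> \<exists>\<rho>2. path E u \<rho>2 w \<and> (\<sigma>0, \<sigma>) \<in> tsem \<rho>2"
proof (induction "length es" arbitrary: es u \<sigma>0 rule: less_induct)
  case less
  show ?case
  proof (cases es)
    case Nil
    then show ?thesis using less.prems by (intro exI[of _ "[]"]) auto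
  next
    case (Cons e es')
    have ein: "e \<in> {(Inl u, s, Inl w) | u s w. (u, s, w) \<in> E} \<union> acc_edges k hds pih"
      and efst: "fst e = Inl u"
      and rest: "path_e ({(Inl u, s, Inl w) | u s w. (u, s, w) \<in> E} \<union> acc_edges k hds pih) (snd (snd e)) es' (Inl w)"
      using less.prems(1) Cons by simp_all
    have sem0: "(\<sigma>0, \<sigma>) \<in> sem (fst (snd e)) O tsem (map (fst \<circ> snd) es')"
      using less.prems(2) Cons by simp
    show ?thesis
    proof (cases "e \<in> acc_edges k hds pih")
      case False
      then have "e \<in> {(Inl u, s, Inl w) | u s w. (u, s, w) \<in> E}" using ein by blast
      then obtain a s b where e: "e = (Inl a, s, Inl b)" "(a, s, b) \<in> E" by blast
      have au: "a = u" using efst e by simp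
      from sem0 e obtain \<sigma>1 where s1: "(\<sigma>0, \<sigma>1) \<in> sem s"
        and s2: "(\<sigma>1, \<sigma>) \<in> tsem (map (fst \<circ> snd) es')" by auto
      have p': "path_e ({(Inl u, s, Inl w) | u s w. (u, s, w) \<in> E} \<union> acc_edges k hds pih) (Inl b) es' (Inl w)"
        using rest e by simp
      have "length es' < length es" using Cons by simp
      from less.hyps[OF this p' s2] obtain \<rho> where "path E b \<rho> w" "(\<sigma>1, \<sigma>) \<in> tsem \<rho>" by blast
      then have "path E u (s # \<rho>) w" "(\<sigma>0, \<sigma>) \<in> tsem (s # \<rho>)" using e au s1 by auto
      then show ?thesis by blast
    next
      case True
      then obtain j i where e: "e = (acc_node hds pih j i, pih j ! i, acc_node hds pih j (Suc i))"
        "j < k" "i < length (pih j)" unfolding acc_edges_def by blast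
      have "acc_node hds pih j i = Inl u" using efst e by simp
      from acc_node_Inl[OF this] e(3) have i0: "i = 0" and uh: "u = hds j" by auto
      have p1: "path_e ({(Inl u, s, Inl w) | u s w. (u, s, w) \<in> E} \<union> acc_edges k hds pih) (acc_node hds pih j (Suc 0)) es' (Inl w)"
        using rest e i0 by simp
      have "0 < Suc 0" "Suc 0 \<le> length (pih j)" using e(3) by auto
      from accel_seg[OF p1 this] obtain es1 es2 where sp: "es' = es1 @ es2"
        "map (fst \<circ> snd) es1 = drop (Suc 0) (pih j)"
        "path_e ({(Inl u, s, Inl w) | u s w. (u, s, w) \<in> E} \<union> acc_edges k hds pih) (Inl (hds j)) es2 (Inl w)"
        by (elim exE conjE)
      have "pih j ! 0 # drop (Suc 0) (pih j) = drop 0 (pih j)" using e(3) i0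
        by (metis Cons_nth_drop_Suc)
      then have "pih j ! 0 # drop 1 (pih j) = pih j" by simp
      then have "map (fst \<circ> snd) es = pih j @ map (fst \<circ> snd) es2"
        using Cons sp e i0 by simp
      with less.prems(2) have "(\<sigma>0, \<sigma>) \<in> tsem (pih j) O tsem (map (fst \<circ> snd) es2)"
        by (simp add: tsem_append)
      then obtain \<sigma>1 where s1: "(\<sigma>0, \<sigma>1) \<in> tsem (pih j)"
        and s2: "(\<sigma>1, \<sigma>) \<in> tsem (map (fst \<circ> snd) es2)" by blast
      have "(\<sigma>0, \<sigma>1) \<in> (\<Union>i. tsem (pi j) ^^ i)" using acc_sub[of "pi j" "pih j"] accs e(2) s1 by blast
      then obtain n where "(\<sigma>0, \<sigma>1) \<in> tsem (pi j) ^^ n" by blast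
      then have r1: "(\<sigma>0, \<sigma>1) \<in> tsem (concat (replicate n (pi j)))" by (simp add: tsem_rep)
      have "length es2 < length es" using Cons sp by simp
      from less.hyps[OF this sp(3) s2] obtain \<rho> where
        r2: "path E (hds j) \<rho> w" "(\<sigma>1, \<sigma>) \<in> tsem \<rho>" by blast
      have lp: "path E (hds j) (pi j) (hds j)" using loops e(2) by simp
      have r3: "path E (hds j) (concat (replicate n (pi j))) (hds j)"
        by (rule path_rep[OF lp])
      have a: "path E u (concat (replicate n (pi j))) (hds j)" unfolding uh by (rule r3)
      have "path E u (concat (replicate n (pi j)) @ \<rho>) w"
        unfolding path_append by (rule exI[where x="hds j"], rule conjI[OF a r2(1)])
      moreover have "(\<sigma>0, \<sigma>) \<in> tsem (concat (replicate n (pi j)) @ \<rho>)"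
        unfolding tsem_append using r1 r2(2) by (rule relcompI)
      ultimately show ?thesis by blast
    qed
  qed
qed

lemma path_lift: "path E u \<rho> w \<Longrightarrow> path ({(Inl u, s, Inl w) | u s w. (u, s, w) \<in> E} \<union> F) (Inl u) \<rho> (Inl w)"
  by (induction \<rho> arbitrary: u) auto

theorem theorem1:
  fixes P :: "('v, 'x :: finite, 'd) cfa"
    and k :: nat and hds :: "nat \<Rightarrow> 'v" and pi pih :: "nat \<Rightarrow> ('x, 'd) stmt list"
  assumes "is_cfa P"
    and "\<forall>j < k. looping_trace P (hds j) (pi j)"
    and "\<forall>j < k. accelerator (pi j) (pih j) \<or> under_accelerator (pi j) (pih j)"
  shows "(\<forall>\<rho>. is_trace P \<rho> \<longrightarrow>
            (\<exists>\<rho>'. is_trace (accelerated_cfa P k hds pih) \<rho>' \<and> subsumed \<rho> \<rho>'))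
       \<and> (\<forall>\<rho>1 \<sigma>0 \<sigma>. accelerated_accepted_trace P k hds pih \<rho>1 \<and> (\<sigma>0, \<sigma>) \<in> tsem \<rho>1 \<longrightarrow>
            (\<exists>\<rho>2. accepted P \<rho>2 \<and> (\<sigma>0, \<sigma>) \<in> tsem \<rho>2))"
proof -
  obtain V E v0 where P: "P = (V, E, v0)" by (cases P) auto
  have loops: "\<forall>j < k. path E (hds j) (pi j) (hds j)" using assms(2) P by (auto simp: looping_trace_def)
  have A: "\<forall>\<rho>. is_trace P \<rho> \<longrightarrow>
            (\<exists>\<rho>'. is_trace (accelerated_cfa P k hds pih) \<rho>' \<and> subsumed \<rho> \<rho>')"
  proof (intro allI impI)
    fix \<rho> assume "is_trace P \<rho>"
    then obtain u w where "u \<in> V" "path E u \<rho> w" using P by (auto simp: is_trace_def)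
    then show "\<exists>\<rho>'. is_trace (accelerated_cfa P k hds pih) \<rho>' \<and> subsumed \<rho> \<rho>'"
      using P path_lift[of E u \<rho> w "acc_edges k hds pih"]
      by (intro exI[of _ \<rho>]) (auto simp: is_trace_def accelerated_cfa_def subsumed_def)
  qed
  have B: "\<forall>\<rho>1 \<sigma>0 \<sigma>. accelerated_accepted_trace P k hds pih \<rho>1 \<and> (\<sigma>0, \<sigma>) \<in> tsem \<rho>1 \<longrightarrow>
            (\<exists>\<rho>2. accepted P \<rho>2 \<and> (\<sigma>0, \<sigma>) \<in> tsem \<rho>2)"
  proof (intro allI impI)
    fix \<rho>1 \<sigma>0 \<sigma> assume h: "accelerated_accepted_trace P k hds pih \<rho>1 \<and> (\<sigma>0, \<sigma>) \<in> tsem \<rho>1"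
    then obtain es w where "path_e ({(Inl u, s, Inl w) | u s w. (u, s, w) \<in> E} \<union> acc_edges k hds pih) (Inl v0) es (Inl w)"
      "map (fst \<circ> snd) es = \<rho>1"
      using P by (auto simp: accelerated_accepted_trace_def accelerated_cfa_def)
    from main_sim[OF loops assms(3) this(1)] this(2) h obtain \<rho>2 where
      "path E v0 \<rho>2 w" "(\<sigma>0, \<sigma>) \<in> tsem \<rho>2" by auto
    then show "\<exists>\<rho>2. accepted P \<rho>2 \<and> (\<sigma>0, \<sigma>) \<in> tsem \<rho>2"
      using P by (auto simp: accepted_def)
  qed
  show ?thesis using A B by blast
qed

end
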